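(* Let $X$ be a subshift of finite type, $Y$ a sofic shift, and $\pi : X \to Y$ a factor code which is right-closing and regular. Then there is a sliding block code $\rho : X \to X_{\mathbb K(Y)}$ such that $L_{\mathbb K(Y)}\circ\rho=\pi$.
   Context: A sliding block code $\pi:X\to Y$ is right-closing if whenever $x,x'\in X$ satisfy $\pi(x)=\pi(x')$ and $x_i=x'_i$ for all $i\le N$ for some $N\in\mathbb Z$, then $x=x'$. For $x\in X$ let $\mathbb U(x)=\{z\in X:\exists N\ \forall i\le N,\ z_i=x_i\}$; $x$ is regular for $\pi$ if $\pi$ maps $\mathbb U(x)$ onto $\mathbb U(\pi(x))$; $\mathcal R(\pi)$ is the set of such points, and $\pi$ is regular if $\mathcal R(\pi)$ is dense in $X$. For a sofic shift $Y\subseteq A^{\mathbb Z}$ and $y\in Y$, $F(y)=\{w\in Y[0,\infty): y_{(-\infty,-1]}w\in Y\}$, where $Y[0,\infty)=\{y_{[0,\infty)}:y\in Y\}$. The future cover $(\mathbb K(Y),L_{\mathbb K(Y)})$ is the labeled graph with vertices the distinct sets $F(y)$, $y\in Y$, and an edge labeled $a\in A$ from $F(y)$ to $F(z)$ exactly when $F(z)=\{w\in A^{\mathbb N}: aw\in F(y)\}$ (one edge per such pair and label); $X_{\mathbb K(Y)}$ is its edge shift and $L_{\mathbb K(Y)}:X_{\mathbb K(Y)}\to Y$ reads labels coordinatewise. *)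

theory Defs
  imports Main
begin

definition window :: "(int \<Rightarrow> 'a) \<Rightarrow> int \<Rightarrow> nat \<Rightarrow> 'a list" where
  "window x i n = map (\<lambda>j. x (i + int j)) [0..<n]"

text \<open>Shift of finite type: described by a (finite) list of allowed blocks of some
  length N (equivalently, a finite list of forbidden blocks).\<close>
definition is_sft :: "(int \<Rightarrow> 'a::finite) set \<Rightarrow> bool" where
  "is_sft X \<longleftrightarrow> (\<exists>N (P :: 'a list set). X = {x. \<forall>i. window x i N \<in> P})"

text \<open>Labeled graphs: edges are triples (source, label, target).\<close>
definition path_shift :: "('v \<times> 'a \<times> 'v) set \<Rightarrow> (int \<Rightarrow> 'v \<times> 'a \<times> 'v) set" where
  "path_shift E = {e. \<forall>i. e i \<in> E \<and> snd (snd (e i)) = fst (e (i + 1))}"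

definition label_map :: "(int \<Rightarrow> 'v \<times> 'a \<times> 'v) \<Rightarrow> (int \<Rightarrow> 'a)" where
  "label_map e = (\<lambda>i. fst (snd (e i)))"

definition is_sofic :: "(int \<Rightarrow> 'a::finite) set \<Rightarrow> bool" where
  "is_sofic Y \<longleftrightarrow> (\<exists>E :: (nat \<times> 'a \<times> nat) set. finite E \<and> Y = label_map ` path_shift E)"

definition sliding_block_code ::
  "(int \<Rightarrow> 'a) set \<Rightarrow> (int \<Rightarrow> 'b) set \<Rightarrow> ((int \<Rightarrow> 'a) \<Rightarrow> (int \<Rightarrow> 'b)) \<Rightarrow> bool" where
  "sliding_block_code X Y \<pi> \<longleftrightarrow> (\<forall>x\<in>X. \<pi> x \<in> Y) \<and>
     (\<exists>(M::nat) (\<Phi> :: 'a list \<Rightarrow> 'b). \<forall>x\<in>X. \<forall>i. \<pi> x i = \<Phi> (window x (i - int M) (2 * M + 1)))"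

definition factor_code ::
  "(int \<Rightarrow> 'a) set \<Rightarrow> (int \<Rightarrow> 'b) set \<Rightarrow> ((int \<Rightarrow> 'a) \<Rightarrow> (int \<Rightarrow> 'b)) \<Rightarrow> bool" where
  "factor_code X Y \<pi> \<longleftrightarrow> sliding_block_code X Y \<pi> \<and> \<pi> ` X = Y"

definition right_closing :: "(int \<Rightarrow> 'a) set \<Rightarrow> ((int \<Rightarrow> 'a) \<Rightarrow> (int \<Rightarrow> 'b)) \<Rightarrow> bool" where
  "right_closing X \<pi> \<longleftrightarrow> (\<forall>x\<in>X. \<forall>x'\<in>X. \<pi> x = \<pi> x' \<and> (\<exists>N. \<forall>i\<le>N. x i = x' i) \<longrightarrow> x = x')"

definition U_set :: "(int \<Rightarrow> 'a) set \<Rightarrow> (int \<Rightarrow> 'a) \<Rightarrow> (int \<Rightarrow> 'a) set" where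
  "U_set X x = {z\<in>X. \<exists>N. \<forall>i\<le>N. z i = x i}"

definition regular_points ::
  "(int \<Rightarrow> 'a) set \<Rightarrow> (int \<Rightarrow> 'b) set \<Rightarrow> ((int \<Rightarrow> 'a) \<Rightarrow> (int \<Rightarrow> 'b)) \<Rightarrow> (int \<Rightarrow> 'a) set" where
  "regular_points X Y \<pi> = {x\<in>X. \<pi> ` U_set X x = U_set Y (\<pi> x)}"

text \<open>Density in the product topology: every central block of every point is matched.\<close>
definition dense_in :: "(int \<Rightarrow> 'a) set \<Rightarrow> (int \<Rightarrow> 'a) set \<Rightarrow> bool" where
  "dense_in R X \<longleftrightarrow> (\<forall>x\<in>X. \<forall>n::nat. \<exists>z\<in>R. \<forall>i. \<bar>i\<bar> \<le> int n \<longrightarrow> z i = x i)"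

definition regular_code ::
  "(int \<Rightarrow> 'a) set \<Rightarrow> (int \<Rightarrow> 'b) set \<Rightarrow> ((int \<Rightarrow> 'a) \<Rightarrow> (int \<Rightarrow> 'b)) \<Rightarrow> bool" where
  "regular_code X Y \<pi> \<longleftrightarrow> dense_in (regular_points X Y \<pi>) X"

definition right_rays :: "(int \<Rightarrow> 'a) set \<Rightarrow> (nat \<Rightarrow> 'a) set" where
  "right_rays Y = {w. \<exists>y\<in>Y. w = (\<lambda>n. y (int n))}"

definition future_set :: "(int \<Rightarrow> 'a) set \<Rightarrow> (int \<Rightarrow> 'a) \<Rightarrow> (nat \<Rightarrow> 'a) set" where
  "future_set Y y = {w\<in>right_rays Y. (\<lambda>i. if i < 0 then y i else w (nat i)) \<in> Y}"

definition cons_seq :: "'a \<Rightarrow> (nat \<Rightarrow> 'a) \<Rightarrow> (nat \<Rightarrow> 'a)" where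
  "cons_seq a w = (\<lambda>n. if n = 0 then a else w (n - 1))"

definition future_cover_edges ::
  "(int \<Rightarrow> 'a) set \<Rightarrow> ((nat \<Rightarrow> 'a) set \<times> 'a \<times> (nat \<Rightarrow> 'a) set) set" where
  "future_cover_edges Y = {(future_set Y y, a, future_set Y z) | y a z.
      y \<in> Y \<and> z \<in> Y \<and> future_set Y z = {w. cons_seq a w \<in> future_set Y y}}"

abbreviation future_cover_shift ::
  "(int \<Rightarrow> 'a) set \<Rightarrow> (int \<Rightarrow> (nat \<Rightarrow> 'a) set \<times> 'a \<times> (nat \<Rightarrow> 'a) set) set" where
  "future_cover_shift Y \<equiv> path_shift (future_cover_edges Y)"

end

theory Submission
  imports Defs "HOL-Library.Infinite_Set"
begin


definition shf :: "int \<Rightarrow> (int \<Rightarrow> 'a) \<Rightarrow> (int \<Rightarrow> 'a)" where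
  "shf k x = (\<lambda>i. x (i + k))"

lemma shf_apply[simp]: "shf k x i = x (i + k)"
  by (simp add: shf_def)

lemma shf_shf[simp]: "shf a (shf b x) = shf (a + b) x"
  by (simp add: shf_def ac_simps)

lemma shf_0[simp]: "shf 0 x = x"
  by (simp add: shf_def)

lemma window_eqI:
  assumes "\<And>j. i \<le> j \<Longrightarrow> j < i + int n \<Longrightarrow> x j = y j"
  shows "window x i n = window y i n"
  unfolding window_def using assms by (auto intro!: map_cong)

lemma window_eqD:
  assumes "window x i n = window y i n" "i \<le> j" "j < i + int n"
  shows "x j = y j"
proof -
  have "\<forall>k\<in>set [0..<n]. x (i + int k) = y (i + int k)"
    using assms(1) unfolding window_def map_eq_conv by simp
  moreover have "nat (j - i) \<in> set [0..<n]" using assms(2,3) by auto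
  ultimately show ?thesis using assms(2) by force
qed

lemma window_shf: "window (shf k x) i n = window x (i + k) n"
  unfolding window_def by (simp add: algebra_simps)

lemma length_window[simp]: "length (window x i n) = n"
  by (simp add: window_def)

lemma finite_windows: "finite (range (\<lambda>k. window (s k :: int \<Rightarrow> 'c::finite) i n))"
proof (rule finite_subset)
  show "range (\<lambda>k. window (s k) i n) \<subseteq> {xs. set xs \<subseteq> UNIV \<and> length xs = n}" by auto
  show "finite {xs. set xs \<subseteq> (UNIV::'c set) \<and> length xs = n}"
    by (rule finite_lists_length_eq) simp
qed

definition agr :: "(nat \<Rightarrow> int \<Rightarrow> 'c) \<Rightarrow> nat \<Rightarrow> (int \<Rightarrow> 'c) \<Rightarrow> nat \<Rightarrow> bool" where
  "agr s R p k \<longleftrightarrow> (\<forall>i. \<bar>i\<bar> \<le> int R \<longrightarrow> s k i = p i)"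

lemma agr_step:
  fixes s :: "nat \<Rightarrow> int \<Rightarrow> 'c::finite"
  assumes "infinite {k. agr s R p k}"
  shows "\<exists>p'. infinite {k. agr s (Suc R) p' k} \<and> (\<forall>i. \<bar>i\<bar> \<le> int R \<longrightarrow> p' i = p i)"
proof -
  let ?A = "{k. agr s R p k}"
  let ?f = "\<lambda>k. window (s k) (- int (Suc R)) (2 * Suc R + 1)"
  have "finite (?f ` ?A)" using finite_windows[of s] by (rule finite_subset[rotated]) auto
  from pigeonhole_infinite[OF assms this]
  obtain k0 where k0: "k0 \<in> ?A" "infinite {k\<in>?A. ?f k = ?f k0}" by blast
  have "{k\<in>?A. ?f k = ?f k0} \<subseteq> {k. agr s (Suc R) (s k0) k}"
  proof
    fix k assume "k \<in> {k\<in>?A. ?f k = ?f k0}"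
    then have e: "?f k = ?f k0" by simp
    show "k \<in> {k. agr s (Suc R) (s k0) k}"
      unfolding agr_def using window_eqD[OF e] by auto
  qed
  then have "infinite {k. agr s (Suc R) (s k0) k}" using k0(2) infinite_super by blast
  moreover have "\<forall>i. \<bar>i\<bar> \<le> int R \<longrightarrow> s k0 i = p i" using k0(1) by (simp add: agr_def)
  ultimately show ?thesis by blast
qed

lemma cluster:
  fixes s :: "nat \<Rightarrow> int \<Rightarrow> 'c::finite"
  shows "\<exists>l. \<forall>R::nat. \<forall>k0. \<exists>k\<ge>k0. \<forall>i. \<bar>i\<bar> \<le> int R \<longrightarrow> s k i = l i"
proof -
  have "finite ((\<lambda>k. s k 0) ` UNIV)" by simp
  from pigeonhole_infinite[OF infinite_UNIV_nat this]
  obtain k0 where "infinite {k. s k 0 = s k0 0}" by auto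
  moreover have "{k. s k 0 = s k0 0} = {k. agr s 0 (s k0) k}" by (auto simp: agr_def)
  ultimately have base: "infinite {k. agr s 0 (s k0) k}" by simp
  define g where "g = (\<lambda>R p. SOME p'. infinite {k. agr s (Suc R) p' k} \<and> (\<forall>i. \<bar>i\<bar> \<le> int R \<longrightarrow> p' i = p i))"
  have g: "infinite {k. agr s (Suc R) (g R p) k} \<and> (\<forall>i. \<bar>i\<bar> \<le> int R \<longrightarrow> g R p i = p i)"
    if "infinite {k. agr s R p k}" for R p
    unfolding g_def by (rule someI_ex[OF agr_step[OF that]])
  define pp where "pp = rec_nat (s k0) g"
  have pp0: "pp 0 = s k0" and ppS: "\<And>n. pp (Suc n) = g n (pp n)" by (simp_all add: pp_def)
  have inf: "infinite {k. agr s n (pp n) k}" for n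
    by (induction n) (use base g in \<open>simp_all add: pp0 ppS\<close>)
  have mono: "\<forall>i. \<bar>i\<bar> \<le> int n \<longrightarrow> pp m i = pp n i" if "n \<le> m" for n m
    using that
  proof (induction m rule: dec_induct)
    case base then show ?case by simp
  next
    case (step m)
    then show ?case using g[OF inf[of m]] by (simp add: ppS)
  qed
  define l where "l = (\<lambda>i. pp (nat \<bar>i\<bar>) i)"
  have "\<exists>k\<ge>k0. \<forall>i. \<bar>i\<bar> \<le> int R \<longrightarrow> s k i = l i" for R k0
  proof -
    obtain k where k: "k \<ge> k0" "k \<in> {k. agr s R (pp R) k}"
      using inf[of R] unfolding infinite_nat_iff_unbounded_le by blast
    have "s k i = l i" if "\<bar>i\<bar> \<le> int R" for i
    proof -
      have "s k i = pp R i" using k(2) that by (simp add: agr_def)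
      also have "\<dots> = pp (nat \<bar>i\<bar>) i" using mono[of "nat \<bar>i\<bar>" R] that by simp
      finally show ?thesis by (simp add: l_def)
    qed
    then show ?thesis using k(1) by blast
  qed
  then show ?thesis by blast
qed



locale setting =
  fixes X :: "(int \<Rightarrow> 'b::finite) set" and N :: nat and P :: "'b list set"
    and \<pi> :: "(int \<Rightarrow> 'b) \<Rightarrow> (int \<Rightarrow> 'a::finite)" and M :: nat and \<Phi> :: "'b list \<Rightarrow> 'a"
    and Y :: "(int \<Rightarrow> 'a) set"
  assumes Xeq: "X = {x. \<forall>i. window x i N \<in> P}"
    and pieq: "\<forall>x\<in>X. \<forall>i. \<pi> x i = \<Phi> (window x (i - int M) (2 * M + 1))"
    and Yeq: "Y = \<pi> ` X"
    and rc: "right_closing X \<pi>"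
    and reg: "regular_code X Y \<pi>"
begin

lemma X_shf: "x \<in> X \<Longrightarrow> shf k x \<in> X"
  using Xeq by (simp add: window_shf)

lemma glue:
  assumes "x \<in> X" "z \<in> X" "\<And>j. c - int N \<le> j \<Longrightarrow> j \<le> c + int N \<Longrightarrow> x j = z j"
  shows "(\<lambda>i. if i < c then x i else z i) \<in> X"
proof -
  have "window (\<lambda>i. if i < c then x i else z i) i N \<in> P" for i
  proof (cases "i < c - int N")
    case True
    then have "window (\<lambda>i. if i < c then x i else z i) i N = window x i N"
      by (intro window_eqI) auto
    then show ?thesis using assms(1) Xeq by auto
  next
    case False
    then have "window (\<lambda>i. if i < c then x i else z i) i N = window z i N"
      by (intro window_eqI) (use assms(3) in auto)
    then show ?thesis using assms(2) Xeq by auto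
  qed
  then show ?thesis using Xeq by auto
qed

lemma pi_local:
  assumes "x \<in> X" "x' \<in> X" "\<And>j. i - int M \<le> j \<Longrightarrow> j \<le> i + int M \<Longrightarrow> x j = x' j"
  shows "\<pi> x i = \<pi> x' i"
proof -
  have "window x (i - int M) (2 * M + 1) = window x' (i - int M) (2 * M + 1)"
    by (rule window_eqI) (use assms(3) in auto)
  then show ?thesis using pieq assms(1,2) by metis
qed

lemma pi_shf: "x \<in> X \<Longrightarrow> \<pi> (shf k x) = shf k (\<pi> x)"
  using pieq X_shf by (auto simp: window_shf algebra_simps)

lemma Y_shf: "y \<in> Y \<Longrightarrow> shf k y \<in> Y"
proof -
  assume "y \<in> Y"
  then obtain x where x: "x \<in> X" "y = \<pi> x" using Yeq by blast
  then have "shf k y = \<pi> (shf k x)" using pi_shf by simp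
  then show "shf k y \<in> Y" using X_shf[OF x(1)] Yeq by blast
qed

lemma U_shf:
  assumes inv: "\<And>k x. x \<in> S \<Longrightarrow> shf k x \<in> S" and "x \<in> S"
  shows "U_set S (shf k x) = shf k ` U_set S x"
proof
  show "shf k ` U_set S x \<subseteq> U_set S (shf k x)"
  proof
    fix z' assume "z' \<in> shf k ` U_set S x"
    then obtain z n where z: "z' = shf k z" "z \<in> S" "\<forall>i\<le>n. z i = x i"
      unfolding U_set_def by blast
    then have "\<forall>i\<le>n - k. z' i = shf k x i" by auto
    then show "z' \<in> U_set S (shf k x)" using z inv unfolding U_set_def by blast
  qed
next
  show "U_set S (shf k x) \<subseteq> shf k ` U_set S x"
  proof
    fix z' assume "z' \<in> U_set S (shf k x)"
    then obtain n where z: "z' \<in> S" "\<forall>i\<le>n. z' i = x (i + k)"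
      unfolding U_set_def by auto
    have "\<forall>i\<le>n + k. shf (-k) z' i = x i"
    proof (intro allI impI)
      fix i assume "i \<le> n + k"
      then show "shf (-k) z' i = x i" using z(2)[rule_format, of "i - k"] by simp
    qed
    then have "shf (-k) z' \<in> U_set S x" using inv z(1) unfolding U_set_def by blast
    moreover have "z' = shf k (shf (-k) z')" by simp
    ultimately show "z' \<in> shf k ` U_set S x" by blast
  qed
qed

lemma reg_shf:
  assumes "x \<in> regular_points X Y \<pi>"
  shows "shf k x \<in> regular_points X Y \<pi>"
proof -
  have x: "x \<in> X" "\<pi> ` U_set X x = U_set Y (\<pi> x)" using assms by (auto simp: regular_points_def)
  have "\<pi> ` U_set X (shf k x) = \<pi> ` shf k ` U_set X x" using U_shf[OF X_shf x(1)] by simp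
  also have "\<dots> = shf k ` \<pi> ` U_set X x"
  proof -
    have "\<pi> ` shf k ` U_set X x = (\<lambda>z. \<pi> (shf k z)) ` U_set X x" by (simp add: image_image)
    also have "\<dots> = (\<lambda>z. shf k (\<pi> z)) ` U_set X x"
      by (rule image_cong) (auto simp: U_set_def pi_shf)
    finally show ?thesis by (simp add: image_image)
  qed
  also have "\<dots> = shf k ` U_set Y (\<pi> x)" using x(2) by simp
  also have "\<dots> = U_set Y (shf k (\<pi> x))"
    using U_shf[OF Y_shf, of "\<pi> x" k] x(1) Yeq by auto
  also have "\<dots> = U_set Y (\<pi> (shf k x))" using pi_shf x(1) by simp
  finally show ?thesis using x(1) X_shf by (simp add: regular_points_def)
qed

lemma future_set_alt: "future_set Y y = {w. (\<lambda>i. if i < 0 then y i else w (nat i)) \<in> Y}"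
proof -
  have "w \<in> right_rays Y" if "(\<lambda>i. if i < 0 then y i else w (nat i)) \<in> Y" for w
    unfolding right_rays_def
    using that by (intro CollectI bexI[OF _ that]) auto
  then show ?thesis unfolding future_set_def by auto
qed

lemma edge:
  assumes "y \<in> Y"
  shows "(future_set Y y, y 0, future_set Y (shf 1 y)) \<in> future_cover_edges Y"
proof -
  have "future_set Y (shf 1 y) = {w. cons_seq (y 0) w \<in> future_set Y y}"
  proof -
    have eq: "shf 1 (\<lambda>i. if i < 0 then y i else cons_seq (y 0) w (nat i))
       = (\<lambda>i. if i < 0 then shf 1 y i else w (nat i))" for w
    proof
      fix i :: int
      show "shf 1 (\<lambda>i. if i < 0 then y i else cons_seq (y 0) w (nat i)) i
          = (if i < 0 then shf 1 y i else w (nat i))"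
        by (cases "i < -1"; cases "i = -1") (auto simp: cons_seq_def nat_add_distrib)
    qed
    have "(\<lambda>i. if i < 0 then shf 1 y i else w (nat i)) \<in> Y \<longleftrightarrow>
          (\<lambda>i. if i < 0 then y i else cons_seq (y 0) w (nat i)) \<in> Y" for w
    proof
      assume "(\<lambda>i. if i < 0 then shf 1 y i else w (nat i)) \<in> Y"
      then have "shf (-1) (shf 1 (\<lambda>i. if i < 0 then y i else cons_seq (y 0) w (nat i))) \<in> Y"
        unfolding eq by (rule Y_shf)
      then show "(\<lambda>i. if i < 0 then y i else cons_seq (y 0) w (nat i)) \<in> Y" by simp
    next
      assume "(\<lambda>i. if i < 0 then y i else cons_seq (y 0) w (nat i)) \<in> Y"
      from Y_shf[OF this, of 1] show "(\<lambda>i. if i < 0 then shf 1 y i else w (nat i)) \<in> Y"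
        unfolding eq .
    qed
    then show ?thesis unfolding future_set_alt by auto
  qed
  moreover have "shf 1 y \<in> Y" using assms Y_shf by blast
  ultimately show ?thesis unfolding future_cover_edges_def using assms by blast
qed

end


lemma leftmost_diff:
  fixes z x :: "int \<Rightarrow> 'c"
  assumes "\<forall>i\<le>n. z i = x i" "z i0 \<noteq> x i0"
  shows "\<exists>j\<le>i0. z j \<noteq> x j \<and> (\<forall>i<j. z i = x i)"
proof -
  define S where "S = {k::nat. z (n + int k) \<noteq> x (n + int k)}"
  have i0: "i0 > n" using assms by (meson not_le)
  have "nat (i0 - n) \<in> S" using i0 assms(2) by (simp add: S_def)
  then have L: "(LEAST k. k \<in> S) \<in> S" "(LEAST k. k \<in> S) \<le> nat (i0 - n)"
    by (auto intro: LeastI Least_le)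
  define j where "j = n + int (LEAST k. k \<in> S)"
  have "z j \<noteq> x j" using L(1) by (simp add: S_def j_def)
  moreover have "j \<le> i0" using L(2) i0 by (simp add: j_def)
  moreover have "\<forall>i<j. z i = x i"
  proof (intro allI impI)
    fix i assume "i < j"
    show "z i = x i"
    proof (cases "i \<le> n")
      case True then show ?thesis using assms(1) by simp
    next
      case False
      then have "nat (i - n) < (LEAST k. k \<in> S)" using \<open>i < j\<close> by (simp add: j_def)
      then have "nat (i - n) \<notin> S" by (rule not_less_Least)
      then show ?thesis using False by (simp add: S_def)
    qed
  qed
  ultimately show ?thesis by blast
qed

context setting
begin

lemma rc_delay:
  "\<exists>D::nat. \<forall>z\<in>X. \<forall>x\<in>X. (\<exists>n. \<forall>i\<le>n. z i = x i) \<longrightarrow> (\<forall>i\<le>-1. \<pi> z i = \<pi> x i)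
      \<longrightarrow> (\<forall>i \<le> - int D - 1. z i = x i)"
proof (rule ccontr)
  assume "\<not> ?thesis"
  then have "\<forall>D::nat. \<exists>a b. a \<in> X \<and> b \<in> X \<and> (\<forall>i<0. a i = b i) \<and> a 0 \<noteq> b 0 \<and>
      (\<forall>i\<le>int D. \<pi> a i = \<pi> b i)"
  proof (intro allI)
    fix D :: nat
    assume "\<not> (\<exists>D::nat. \<forall>z\<in>X. \<forall>x\<in>X. (\<exists>n. \<forall>i\<le>n. z i = x i) \<longrightarrow> (\<forall>i\<le>-1. \<pi> z i = \<pi> x i)
      \<longrightarrow> (\<forall>i \<le> - int D - 1. z i = x i))"
    then obtain z x n i0 where zx: "z \<in> X" "x \<in> X" "\<forall>i\<le>n. z i = x i" "\<forall>i\<le>-1. \<pi> z i = \<pi> x i"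
      "i0 \<le> - int D - 1" "z i0 \<noteq> x i0" by blast
    obtain j where j: "j \<le> i0" "z j \<noteq> x j" "\<forall>i<j. z i = x i"
      using leftmost_diff[OF zx(3,6)] by blast
    have "\<forall>i\<le>int D. \<pi> (shf j z) i = \<pi> (shf j x) i"
      using zx(1,2,4,5) j(1) by (auto simp: pi_shf)
    moreover have "\<forall>i<0. shf j z i = shf j x i" using j(3) by simp
    ultimately show "\<exists>a b. a \<in> X \<and> b \<in> X \<and> (\<forall>i<0. a i = b i) \<and> a 0 \<noteq> b 0 \<and>
      (\<forall>i\<le>int D. \<pi> a i = \<pi> b i)"
      using X_shf zx(1,2) j(2) by (intro exI[of _ "shf j z"] exI[of _ "shf j x"]) auto
  qed
  then obtain A B where AB: "\<And>D. A D \<in> X" "\<And>D. B D \<in> X" "\<And>D i. i < 0 \<Longrightarrow> A D i = B D i"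
    "\<And>D. A D 0 \<noteq> B D 0" "\<And>D i. i \<le> int D \<Longrightarrow> \<pi> (A D) i = \<pi> (B D) i"
    by metis
  obtain l where l: "\<forall>R::nat. \<forall>k0. \<exists>k\<ge>k0. \<forall>i. \<bar>i\<bar> \<le> int R \<longrightarrow> (A k i, B k i) = l i"
    using cluster[of "\<lambda>k i. (A k i, B k i)"] by blast
  define a where "a = (\<lambda>i. fst (l i))"
  define b where "b = (\<lambda>i. snd (l i))"
  have near: "\<exists>k\<ge>k0. \<forall>i. \<bar>i\<bar> \<le> int R \<longrightarrow> A k i = a i \<and> B k i = b i" for R k0
  proof -
    obtain k where "k \<ge> k0" "\<forall>i. \<bar>i\<bar> \<le> int R \<longrightarrow> (A k i, B k i) = l i" using l by blast
    then show ?thesis unfolding a_def b_def by (metis fst_conv snd_conv)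
  qed
  have aX: "a \<in> X" and bX: "b \<in> X"
  proof -
    have "window a i N \<in> P \<and> window b i N \<in> P" for i
    proof -
      obtain k where k: "\<forall>j. \<bar>j\<bar> \<le> int (nat \<bar>i\<bar> + N) \<longrightarrow> A k j = a j \<and> B k j = b j"
        using near by blast
      have "window a i N = window (A k) i N" "window b i N = window (B k) i N"
        using k by (auto intro!: window_eqI)
      then show ?thesis using AB(1,2) Xeq by auto
    qed
    then show "a \<in> X" "b \<in> X" using Xeq by auto
  qed
  have "a i = b i" if "i \<le> -1" for i
  proof -
    obtain k where k: "\<forall>j. \<bar>j\<bar> \<le> int (nat \<bar>i\<bar>) \<longrightarrow> A k j = a j \<and> B k j = b j"
      using near by blast
    then show ?thesis using AB(3)[of i k] that by auto
  qed
  moreover have "\<pi> a = \<pi> b"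
  proof
    fix i
    obtain k where k: "k \<ge> nat \<bar>i\<bar>" "\<forall>j. \<bar>j\<bar> \<le> int (nat \<bar>i\<bar> + M) \<longrightarrow> A k j = a j \<and> B k j = b j"
      using near by blast
    have "\<pi> a i = \<pi> (A k) i" using k(2) by (intro pi_local[OF aX AB(1)]) auto
    also have "\<dots> = \<pi> (B k) i" using k(1) by (intro AB(5)) auto
    also have "\<dots> = \<pi> b i" using k(2) by (intro pi_local[OF AB(2) bX]) auto
    finally show "\<pi> a i = \<pi> b i" .
  qed
  ultimately have "a = b" using rc aX bX unfolding right_closing_def by blast
  moreover have "a 0 \<noteq> b 0"
  proof -
    obtain k where k: "\<forall>j. \<bar>j\<bar> \<le> int 0 \<longrightarrow> A k j = a j \<and> B k j = b j"
      using near by blast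
    then show ?thesis using AB(4)[of k] by auto
  qed
  ultimately show False by simp
qed

end


context setting
begin

abbreviation "RP \<equiv> regular_points X Y \<pi>"

lemma fut_one:
  assumes D: "\<forall>z\<in>X. \<forall>x\<in>X. (\<exists>n. \<forall>i\<le>n. z i = x i) \<longrightarrow> (\<forall>i\<le>-1. \<pi> z i = \<pi> x i)
      \<longrightarrow> (\<forall>i \<le> - int D - 1. z i = x i)"
    and a: "a \<in> RP" and b: "b \<in> X"
    and ab: "\<And>i. \<bar>i\<bar> \<le> int (D + 2*M + 2*N + 2) \<Longrightarrow> a i = b i"
  shows "future_set Y (\<pi> a) \<subseteq> future_set Y (\<pi> b)"
proof
  let ?K = "int (D + 2*M + 2*N + 2)"
  have aX: "a \<in> X" and areg: "\<pi> ` U_set X a = U_set Y (\<pi> a)" using a by (auto simp: regular_points_def)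
  fix w assume "w \<in> future_set Y (\<pi> a)"
  then have y'Y: "(\<lambda>i. if i < 0 then \<pi> a i else w (nat i)) \<in> Y" (is "?y' \<in> Y")
    by (simp add: future_set_alt)
  then have "?y' \<in> U_set Y (\<pi> a)" unfolding U_set_def by (intro CollectI conjI exI[of _ "-1"]) auto
  then have "?y' \<in> \<pi> ` U_set X a" using areg by simp
  then obtain z where z1: "z \<in> U_set X a" and z2: "?y' = \<pi> z" by (rule imageE)
  note z = z1 z2[symmetric]
  then have zX: "z \<in> X" and zn: "\<exists>n. \<forall>i\<le>n. z i = a i" by (auto simp: U_set_def)
  have "\<forall>i\<le>-1. \<pi> z i = \<pi> a i" using z(2) by auto
  then have za: "\<And>i. i \<le> - int D - 1 \<Longrightarrow> z i = a i" using D[rule_format, OF zX aX zn] by blast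
  define c where "c = - int (D + N + 1)"
  define z'' where "z'' = (\<lambda>i. if i < c then b i else z i)"
  have z''X: "z'' \<in> X" unfolding z''_def
  proof (rule glue[OF b zX])
    fix j assume j: "c - int N \<le> j" "j \<le> c + int N"
    then have "z j = a j" by (intro za) (simp add: c_def)
    moreover have "a j = b j" using j by (intro ab) (simp add: c_def)
    ultimately show "b j = z j" by simp
  qed
  have A1: "z'' i = b i" if "i \<le> - int D - 1" for i
  proof (cases "i < c")
    case True then show ?thesis by (simp add: z''_def)
  next
    case False
    then have "z i = a i" using that by (intro za)
    moreover have "a i = b i" using that False by (intro ab) (simp add: c_def)
    ultimately show ?thesis using False by (simp add: z''_def)
  qed
  have A2: "z'' i = z i" if "i \<ge> - ?K" for i
  proof (cases "i < c")
    case False then show ?thesis by (simp add: z''_def)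
  next
    case True
    then have "z i = a i" by (intro za) (simp add: c_def)
    moreover have "a i = b i" using that True by (intro ab) (simp add: c_def)
    ultimately show ?thesis using True by (simp add: z''_def)
  qed
  have "\<pi> z'' = (\<lambda>i. if i < 0 then \<pi> b i else w (nat i))"
  proof
    fix i :: int
    show "\<pi> z'' i = (if i < 0 then \<pi> b i else w (nat i))"
    proof (cases "i < 0")
      case True
      show ?thesis
      proof (cases "i \<le> - int D - 1 - int M")
        case True
        then have "\<pi> z'' i = \<pi> b i" by (intro pi_local[OF z''X b] A1) auto
        then show ?thesis using \<open>i < 0\<close> by simp
      next
        case False
        then have "\<pi> z'' i = \<pi> z i" by (intro pi_local[OF z''X zX] A2) auto
        also have "\<dots> = \<pi> a i" using z(2) \<open>i < 0\<close> by simp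
        also have "\<dots> = \<pi> b i" using False \<open>i < 0\<close> by (intro pi_local[OF aX b] ab) auto
        finally show ?thesis using \<open>i < 0\<close> by simp
      qed
    next
      case False
      then have "\<pi> z'' i = \<pi> z i" by (intro pi_local[OF z''X zX] A2) auto
      also have "\<dots> = w (nat i)" using z(2) False by simp
      finally show ?thesis using False by simp
    qed
  qed
  moreover have "\<pi> z'' \<in> Y" using z''X Yeq by auto
  ultimately show "w \<in> future_set Y (\<pi> b)" by (simp add: future_set_alt)
qed

lemma fut_eq:
  "\<exists>K::nat. \<forall>a\<in>RP. \<forall>b\<in>RP. (\<forall>i. \<bar>i\<bar> \<le> int K \<longrightarrow> a i = b i) \<longrightarrow> future_set Y (\<pi> a) = future_set Y (\<pi> b)"
proof -
  obtain D where D: "\<forall>z\<in>X. \<forall>x\<in>X. (\<exists>n. \<forall>i\<le>n. z i = x i) \<longrightarrow> (\<forall>i\<le>-1. \<pi> z i = \<pi> x i)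
      \<longrightarrow> (\<forall>i \<le> - int D - 1. z i = x i)" using rc_delay by blast
  have "\<forall>a\<in>RP. \<forall>b\<in>RP. (\<forall>i. \<bar>i\<bar> \<le> int (D + 2*M + 2*N + 2) \<longrightarrow> a i = b i) \<longrightarrow>
     future_set Y (\<pi> a) = future_set Y (\<pi> b)"
  proof (intro ballI impI)
    fix a b assume a: "a \<in> RP" and b: "b \<in> RP" and ab: "\<forall>i. \<bar>i\<bar> \<le> int (D + 2*M + 2*N + 2) \<longrightarrow> a i = b i"
    have aX: "a \<in> X" "b \<in> X" using a b by (auto simp: regular_points_def)
    show "future_set Y (\<pi> a) = future_set Y (\<pi> b)"
      using fut_one[OF D a aX(2)] fut_one[OF D b aX(1)] ab by (metis subset_antisym)
  qed
  then show ?thesis by blast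
qed

lemma main:
  "\<exists>\<rho>. sliding_block_code X (future_cover_shift Y) \<rho> \<and> (\<forall>x\<in>X. label_map (\<rho> x) = \<pi> x)"
proof -
  obtain K where K: "\<And>a b. a\<in>RP \<Longrightarrow> b\<in>RP \<Longrightarrow> (\<forall>i. \<bar>i\<bar> \<le> int K \<longrightarrow> a i = b i) \<Longrightarrow>
      future_set Y (\<pi> a) = future_set Y (\<pi> b)" using fut_eq by blast
  define T where "T = K + M + 1"
  define rr where "rr = (\<lambda>u. SOME r. r \<in> RP \<and> window r (- int T) (2 * T + 1) = u)"
  define \<Psi> where "\<Psi> = (\<lambda>u. (future_set Y (\<pi> (rr u)), \<pi> (rr u) 0, future_set Y (shf 1 (\<pi> (rr u)))))"
  define \<rho> where "\<rho> = (\<lambda>x i. \<Psi> (window x (i - int T) (2 * T + 1)))"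
  have rr: "rr (window x (i - int T) (2 * T + 1)) \<in> RP \<and>
      (\<forall>j. \<bar>j\<bar> \<le> int T \<longrightarrow> rr (window x (i - int T) (2 * T + 1)) j = x (i + j))"
    if x: "x \<in> X" for x i
  proof -
    obtain r where r: "r \<in> RP" "\<forall>j. \<bar>j\<bar> \<le> int T \<longrightarrow> r j = shf i x j"
      using reg X_shf[OF x, of i] unfolding regular_code_def dense_in_def by blast
    have "window r (- int T) (2 * T + 1) = window (shf i x) (- int T) (2 * T + 1)"
      using r(2) by (intro window_eqI) auto
    also have "\<dots> = window x (i - int T) (2 * T + 1)" by (simp add: window_shf)
    finally have "\<exists>r. r \<in> RP \<and> window r (- int T) (2 * T + 1) = window x (i - int T) (2 * T + 1)"
      using r(1) by blast
    then have s: "rr (window x (i - int T) (2 * T + 1)) \<in> RP"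
      "window (rr (window x (i - int T) (2 * T + 1))) (- int T) (2 * T + 1) = window x (i - int T) (2 * T + 1)"
      unfolding rr_def by (metis (mono_tags, lifting) someI_ex)+
    have "\<forall>j. \<bar>j\<bar> \<le> int T \<longrightarrow> rr (window x (i - int T) (2 * T + 1)) j = x (i + j)"
    proof (intro allI impI)
      fix j :: int assume "\<bar>j\<bar> \<le> int T"
      have "window (rr (window x (i - int T) (2 * T + 1))) (- int T) (2 * T + 1)
          = window (shf i x) (- int T) (2 * T + 1)" using s(2) by (simp add: window_shf)
      from window_eqD[OF this, of j] \<open>\<bar>j\<bar> \<le> int T\<close>
      show "rr (window x (i - int T) (2 * T + 1)) j = x (i + j)" by (simp add: add.commute)
    qed
    then show ?thesis using s(1) by blast
  qed
  have RPX: "r \<in> RP \<Longrightarrow> r \<in> X" for r by (simp add: regular_points_def)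
  have lab: "label_map (\<rho> x) = \<pi> x" if x: "x \<in> X" for x
  proof
    fix i
    let ?r = "rr (window x (i - int T) (2 * T + 1))"
    have "label_map (\<rho> x) i = \<pi> ?r 0" by (simp add: label_map_def \<rho>_def \<Psi>_def)
    also have "\<dots> = \<pi> (shf i x) 0"
      using rr[OF x, of i] by (intro pi_local RPX X_shf x) (auto simp: T_def add.commute)
    also have "\<dots> = \<pi> x i" using pi_shf[OF x] by simp
    finally show "label_map (\<rho> x) i = \<pi> x i" .
  qed
  have path: "\<rho> x \<in> future_cover_shift Y" if x: "x \<in> X" for x
    unfolding path_shift_def
  proof (intro CollectI allI conjI)
    fix i
    let ?r = "rr (window x (i - int T) (2 * T + 1))"
    let ?r' = "rr (window x (i + 1 - int T) (2 * T + 1))"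
    have "\<pi> ?r \<in> Y" using rr[OF x, of i] RPX Yeq by blast
    from edge[OF this] show "\<rho> x i \<in> future_cover_edges Y" by (simp add: \<rho>_def \<Psi>_def)
    have "snd (snd (\<rho> x i)) = future_set Y (\<pi> (shf 1 ?r))"
      using pi_shf rr[OF x, of i] RPX by (simp add: \<rho>_def \<Psi>_def)
    also have "\<dots> = future_set Y (\<pi> ?r')"
    proof (rule K)
      show "shf 1 ?r \<in> RP" using rr[OF x, of i] reg_shf by blast
      show "?r' \<in> RP" using rr[OF x, of "i+1"] by simp
      show "\<forall>j. \<bar>j\<bar> \<le> int K \<longrightarrow> shf 1 ?r j = ?r' j"
      proof (intro allI impI)
        fix j :: int assume j: "\<bar>j\<bar> \<le> int K"
        have "shf 1 ?r j = x (i + (j + 1))" using rr[OF x, of i] j by (simp add: T_def)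
        moreover have "?r' j = x (i + 1 + j)" using rr[OF x, of "i+1"] j by (simp add: T_def)
        ultimately show "shf 1 ?r j = ?r' j" by (simp add: ac_simps)
      qed
    qed
    also have "\<dots> = fst (\<rho> x (i + 1))" by (simp add: \<rho>_def \<Psi>_def algebra_simps)
    finally show "snd (snd (\<rho> x i)) = fst (\<rho> x (i + 1))" .
  qed
  have "sliding_block_code X (future_cover_shift Y) \<rho>"
    unfolding sliding_block_code_def using path
    by (intro conjI ballI exI[of _ T] exI[of _ \<Psi>]) (auto simp: \<rho>_def)
  then show ?thesis using lab by blast
qed

end

theorem proposition3p13:
  fixes X :: "(int \<Rightarrow> 'b::finite) set"
    and Y :: "(int \<Rightarrow> 'a::finite) set"
    and \<pi> :: "(int \<Rightarrow> 'b) \<Rightarrow> (int \<Rightarrow> 'a)"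
  assumes "is_sft X"
    and "is_sofic Y"
    and "factor_code X Y \<pi>"
    and "right_closing X \<pi>"
    and "regular_code X Y \<pi>"
  shows "\<exists>\<rho>. sliding_block_code X (future_cover_shift Y) \<rho> \<and>
             (\<forall>x\<in>X. label_map (\<rho> x) = \<pi> x)"
proof -
  obtain N and P :: "'b list set" where NP: "X = {x. \<forall>i. window x i N \<in> P}"
    using assms(1) unfolding is_sft_def by blast
  obtain M and \<Phi> :: "'b list \<Rightarrow> 'a" where MP: "\<forall>x\<in>X. \<forall>i. \<pi> x i = \<Phi> (window x (i - int M) (2 * M + 1))"
    using assms(3) unfolding factor_code_def sliding_block_code_def by blast
  have Yeq: "Y = \<pi> ` X" using assms(3) unfolding factor_code_def by simp
  interpret setting X N P \<pi> M \<Phi> Y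
    using NP MP Yeq assms(4,5) by unfold_locales
  show ?thesis by (rule main)
qed

end
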